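(* Consider $P(\omega)$ with the Michael topology. Assume that $[\omega]^{<\omega}\subseteq Y\subseteq P(\omega)$, $Y$ is countable, and $\mathcal{U}$ is a family of open subsets of $P(\omega)$ such that each finite subset of $Y$ is included in some member of $\mathcal{U}$. Then there are natural numbers $m_0<m_1<\cdots$ and (not necessarily distinct) $U_0,U_1,\ldots\in\mathcal{U}$ such that: (1) for each $y\in Y$, $y\in U_n$ for all but finitely many $n$; (2) for each $x\subseteq\omega$ and each $n$, if $x\cap(m_n,m_{n+1})=\emptyset$ then $x\in U_n$.
   Context: $P(\omega)$ is identified with the Cantor space $2^\omega$ via characteristic functions; this gives the Cantor topology on $P(\omega)$, with basic open sets $[s,n]=\{x\in P(\omega): x\cap\{0,\dots,n-1\}=s\}$ for $n\in\omega$, $s\subseteq\{0,\dots,n-1\}$. The Michael topology on $P(\omega)$ is the finer topology obtained from the Cantor topology by additionally declaring every infinite subset of $\omega$ (every element of $[\omega]^\omega$) to be an isolated point. $[\omega]^{<\omega}$ denotes the set of finite subsets of $\omega$. For natural numbers $a<b$, $(a,b)=\{k\in\omega : a<k<b\}$. *)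

theory Defs
  imports "HOL-Analysis.Analysis"
begin

definition cantor_basic :: "nat \<Rightarrow> nat set \<Rightarrow> nat set set" where
  "cantor_basic n s = {x. x \<inter> {0..<n} = s}"

definition cantor_basis :: "nat set set set" where
  "cantor_basis = {cantor_basic n s | n s. s \<subseteq> {0..<n}}"

definition cantor_topology :: "nat set topology" where
  "cantor_topology = topology_generated_by cantor_basis"

definition michael_topology :: "nat set topology" where
  "michael_topology = topology_generated_by (cantor_basis \<union> {{x} | x. infinite x})"

end

theory Submission
  imports Defs
begin

definition nbhd :: "nat set set \<Rightarrow> nat set \<Rightarrow> bool" where
  "nbhd S s \<longleftrightarrow> (\<exists>k. \<forall>x. x \<inter> {0..<k} = s \<inter> {0..<k} \<longrightarrow> x \<in> S)"

lemma nbhd_mono: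
  fixes k k' :: nat
  assumes "\<forall>x. x \<inter> {0..<k} = s \<inter> {0..<k} \<longrightarrow> x \<in> S" "k \<le> k'"
  shows "\<forall>x. x \<inter> {0..<k'} = s \<inter> {0..<k'} \<longrightarrow> x \<in> S"
proof (intro allI impI)
  fix x assume h: "x \<inter> {0..<k'} = s \<inter> {0..<k'}"
  have "x \<inter> {0..<k} = s \<inter> {0..<k}"
  proof -
    have e0: "{0..<k'} \<inter> {0..<k} = {0..<k}" using assms(2) by auto
    have "x \<inter> {0..<k} = (x \<inter> {0..<k'}) \<inter> {0..<k}" by (metis Int_assoc e0)
    also have "\<dots> = (s \<inter> {0..<k'}) \<inter> {0..<k}" using h by simp
    also have "\<dots> = s \<inter> {0..<k}" using assms(2) by auto
    finally show ?thesis .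
  qed
  then show "x \<in> S" using assms(1) by blast
qed

lemma gen_nbhd:
  assumes "generate_topology_on (cantor_basis \<union> {{x} | x. infinite x}) S"
  shows "\<forall>s. finite s \<and> s \<in> S \<longrightarrow> nbhd S s"
  using assms
proof (induction rule: generate_topology_on.induct)
  case Empty
  then show ?case by simp
next
  case (Int a b)
  show ?case
  proof (intro allI impI)
    fix s assume s: "finite s \<and> s \<in> a \<inter> b"
    then obtain k1 where k1: "\<forall>x. x \<inter> {0..<k1} = s \<inter> {0..<k1} \<longrightarrow> x \<in> a"
      using Int.IH(1) unfolding nbhd_def by blast
    obtain k2 where k2: "\<forall>x. x \<inter> {0..<k2} = s \<inter> {0..<k2} \<longrightarrow> x \<in> b"
      using Int.IH(2) s unfolding nbhd_def by blast
    have "\<forall>x. x \<inter> {0..<max k1 k2} = s \<inter> {0..<max k1 k2} \<longrightarrow> x \<in> a"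
      by (rule nbhd_mono[OF k1]) simp
    moreover have "\<forall>x. x \<inter> {0..<max k1 k2} = s \<inter> {0..<max k1 k2} \<longrightarrow> x \<in> b"
      by (rule nbhd_mono[OF k2]) simp
    ultimately show "nbhd (a \<inter> b) s" unfolding nbhd_def by blast
  qed
next
  case (UN K)
  show ?case
  proof (intro allI impI)
    fix s assume s: "finite s \<and> s \<in> \<Union>K"
    then obtain k where "k \<in> K" "s \<in> k" by blast
    with UN.IH s obtain j where "\<forall>x. x \<inter> {0..<j} = s \<inter> {0..<j} \<longrightarrow> x \<in> k"
      unfolding nbhd_def by blast
    with \<open>k \<in> K\<close> show "nbhd (\<Union>K) s" unfolding nbhd_def by blast
  qed
next
  case (Basis t)
  show ?case
  proof (intro allI impI)
    fix s assume s: "finite s \<and> s \<in> t"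
    from Basis s have "t \<in> cantor_basis" by auto
    then obtain n r where t: "t = cantor_basic n r" unfolding cantor_basis_def by blast
    with s have "s \<inter> {0..<n} = r" unfolding cantor_basic_def by simp
    then have "\<forall>x. x \<inter> {0..<n} = s \<inter> {0..<n} \<longrightarrow> x \<in> t"
      using t unfolding cantor_basic_def by simp
    then show "nbhd t s" unfolding nbhd_def by blast
  qed
qed

theorem lemma4p5:
  fixes Y :: "nat set set" and \<U> :: "nat set set set"
  assumes "{x. finite x} \<subseteq> Y"
    and "countable Y"
    and "\<forall>U\<in>\<U>. openin michael_topology U"
    and "\<forall>F. finite F \<and> F \<subseteq> Y \<longrightarrow> (\<exists>U\<in>\<U>. F \<subseteq> U)"
  shows "\<exists>m :: nat \<Rightarrow> nat. \<exists>Us :: nat \<Rightarrow> nat set set.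
           strict_mono m \<and> (\<forall>n. Us n \<in> \<U>)
         \<and> (\<forall>y\<in>Y. finite {n. y \<notin> Us n})
         \<and> (\<forall>x n. x \<inter> {m n<..<m (Suc n)} = {} \<longrightarrow> x \<in> Us n)"
proof -
  define e where "e = from_nat_into Y"
  have Yne: "Y \<noteq> {}" using assms(1) by auto
  have eY: "e i \<in> Y" for i unfolding e_def using Yne by (simp add: from_nat_into)
  have rng: "Y \<subseteq> range e" unfolding e_def using assms(2) Yne
    by (simp add: range_from_nat_into)
  have step: "\<exists>U M. U \<in> \<U> \<and> k < M \<and> (\<forall>i\<le>n. e i \<in> U) \<and> (\<forall>x. x \<inter> {k<..<M} = {} \<longrightarrow> x \<in> U)"
    for n k
  proof -
    define T where "T = e ` {..n} \<union> Pow {0..k}"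
    have "finite T" unfolding T_def by simp
    moreover have "T \<subseteq> Y" unfolding T_def using eY assms(1)
      by (auto dest: finite_subset[OF _ finite_atLeastAtMost])
    ultimately obtain U where U: "U \<in> \<U>" "T \<subseteq> U" using assms(4) by blast
    have gen: "generate_topology_on (cantor_basis \<union> {{x} | x. infinite x}) U"
      using assms(3) U(1) unfolding michael_topology_def
      by (simp add: openin_topology_generated_by_iff)
    have "\<forall>s\<in>Pow {0..k}. \<exists>j. \<forall>x. x \<inter> {0..<j} = s \<inter> {0..<j} \<longrightarrow> x \<in> U"
    proof
      fix s assume s: "s \<in> Pow {0..k}"
      then have "finite s" by (auto intro: finite_subset)
      moreover have "s \<in> U" using s U(2) unfolding T_def by auto
      ultimately show "\<exists>j. \<forall>x. x \<inter> {0..<j} = s \<inter> {0..<j} \<longrightarrow> x \<in> U"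
        using gen_nbhd[OF gen] unfolding nbhd_def by blast
    qed
    then obtain J where J: "\<And>s. s \<in> Pow {0..k} \<Longrightarrow> \<forall>x. x \<inter> {0..<J s} = s \<inter> {0..<J s} \<longrightarrow> x \<in> U"
      by metis
    define M where "M = k + 1 + (\<Sum>s\<in>Pow {0..k}. J s)"
    have JM: "J s \<le> M" if "s \<in> Pow {0..k}" for s
    proof -
      have "J s \<le> (\<Sum>s\<in>Pow {0..k}. J s)"
        using that by (intro member_le_sum) auto
      then show ?thesis unfolding M_def by simp
    qed
    have "\<forall>x. x \<inter> {k<..<M} = {} \<longrightarrow> x \<in> U"
    proof (intro allI impI)
      fix x assume x: "x \<inter> {k<..<M} = {}"
      define s where "s = x \<inter> {0..k}"
      have sP: "s \<in> Pow {0..k}" unfolding s_def by auto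
      have "x \<inter> {0..<J s} = s \<inter> {0..<J s}"
      proof (rule set_eqI)
        fix i
        show "i \<in> x \<inter> {0..<J s} \<longleftrightarrow> i \<in> s \<inter> {0..<J s}"
        proof (cases "i \<le> k")
          case True then show ?thesis unfolding s_def by auto
        next
          case False
          then show ?thesis using x JM[OF sP] unfolding s_def by auto
        qed
      qed
      then show "x \<in> U" using J[OF sP] by blast
    qed
    moreover have "\<forall>i\<le>n. e i \<in> U" using U(2) unfolding T_def by auto
    moreover have "k < M" unfolding M_def by simp
    ultimately show ?thesis using U(1) by blast
  qed
  then have "\<forall>p. \<exists>q. fst q \<in> \<U> \<and> snd p < snd q \<and> (\<forall>i\<le>fst p. e i \<in> fst q) \<and> (\<forall>x. x \<inter> {snd p<..<snd q} = {} \<longrightarrow> x \<in> fst q)"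
    by auto
  then obtain f where f: "\<forall>p. fst (f p) \<in> \<U> \<and> snd p < snd (f p) \<and> (\<forall>i\<le>fst p. e i \<in> fst (f p)) \<and> (\<forall>x. x \<inter> {snd p<..<snd (f p)} = {} \<longrightarrow> x \<in> fst (f p))"
    by (metis choice)
  define UU where "UU n k = fst (f (n,k))" for n k
  define MM where "MM n k = snd (f (n,k))" for n k
  have UM: "UU n k \<in> \<U> \<and> k < MM n k \<and> (\<forall>i\<le>n. e i \<in> UU n k)
       \<and> (\<forall>x. x \<inter> {k<..<MM n k} = {} \<longrightarrow> x \<in> UU n k)" for n k :: nat
    using f[rule_format, of "(n,k)"] unfolding UU_def MM_def by simp
  define m where "m = rec_nat 0 (\<lambda>n k. MM n k)"
  have mS: "m (Suc n) = MM n (m n)" for n unfolding m_def by simp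
  define Us where "Us n = UU n (m n)" for n
  have "strict_mono m"
    by (rule strict_monoI_Suc) (simp add: mS UM)
  moreover have "\<forall>n. Us n \<in> \<U>" unfolding Us_def using UM by blast
  moreover have "\<forall>y\<in>Y. finite {n. y \<notin> Us n}"
  proof
    fix y assume "y \<in> Y"
    then obtain i where i: "y = e i" using rng by blast
    have "{n. y \<notin> Us n} \<subseteq> {..<i}"
      unfolding Us_def i using UM by (auto simp: not_less[symmetric])
    then show "finite {n. y \<notin> Us n}" by (rule finite_subset) simp
  qed
  moreover have "\<forall>x n. x \<inter> {m n<..<m (Suc n)} = {} \<longrightarrow> x \<in> Us n"
    unfolding Us_def mS using UM by blast
  ultimately show ?thesis by blast
qed

end
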